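(* Let $q$ be a prime power, $7\le n\le q$, $\alpha_1,\dots,\alpha_n\in\mathbb{F}_q$ distinct, $u_1,\dots,u_n\in\mathbb{F}_q^*$, and $H\in\mathbb{F}_q^{6\times n}$ with $H_{ab}=u_b\alpha_b^{a-1}$ (so $\ker H$ has distance $7$). Then the number of $e\in\mathbb{F}_q^n$ with $|e|=4$ for which there exists $e'\in\mathbb{F}_q^n$ with $|e'|\le 3$ and $He'=He$ is at most $$\frac{(n-4)(n-5)(n-6)}{6(q-1)^3}\cdot(q-1)^4\binom{n}{4}.$$
   Context: $|e|$ denotes the Hamming weight of $e\in\mathbb{F}_q^n$. *)

theory Defs
  imports Complex_Main "HOL-Library.Cardinality"
begin

text \<open>Vectors of F_q^n are represented as functions nat => 'a vanishing outside {0..<n}.\<close>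

definition vecs :: "nat \<Rightarrow> (nat \<Rightarrow> 'a::zero) set" where
  "vecs n = {e. \<forall>i. n \<le> i \<longrightarrow> e i = 0}"

definition hweight :: "nat \<Rightarrow> (nat \<Rightarrow> 'a::zero) \<Rightarrow> nat" where
  "hweight n e = card {i \<in> {..<n}. e i \<noteq> 0}"

text \<open>Parity check matrix H with rows a = 0..5 (paper index a-1) and entries u_b * alpha_b^(a-1).\<close>

definition Hmat :: "(nat \<Rightarrow> 'a::field) \<Rightarrow> (nat \<Rightarrow> 'a) \<Rightarrow> nat \<Rightarrow> nat \<Rightarrow> 'a" where
  "Hmat u \<alpha> a b = u b * \<alpha> b ^ a"

definition syndrome :: "nat \<Rightarrow> (nat \<Rightarrow> 'a::field) \<Rightarrow> (nat \<Rightarrow> 'a) \<Rightarrow> (nat \<Rightarrow> 'a) \<Rightarrow> nat \<Rightarrow> 'a" where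
  "syndrome n u \<alpha> e a = (if a < 6 then (\<Sum>b<n. Hmat u \<alpha> a b * e b) else 0)"

end

theory Submission
  imports Defs "HOL-Computational_Algebra.Polynomial"
begin

lemma L1:
  fixes \<alpha> u c :: "nat \<Rightarrow> 'a::field"
  assumes inj: "inj_on \<alpha> {..<n}" and u: "\<forall>i<n. u i \<noteq> 0" and c: "c \<in> vecs n"
   and ker: "\<forall>a<6. (\<Sum>b<n. u b * \<alpha> b ^ a * c b) = 0"
   and w: "card {i\<in>{..<n}. c i \<noteq> 0} \<le> 6"
  shows "c i = 0"
proof (rule ccontr)
  assume ne: "c i \<noteq> 0"
  have cz: "\<forall>j. n \<le> j \<longrightarrow> c j = 0" using c by (simp add: vecs_def)
  have i: "i < n" using cz ne by (cases "i < n") auto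
  define W where "W = {i\<in>{..<n}. c i \<noteq> 0}"
  have iW: "i \<in> W" using i ne W_def by auto
  have fW: "finite W" by (simp add: W_def)
  define p where "p = (\<Prod>b\<in>W-{i}. [:- \<alpha> b, 1:])"
  have deg: "degree p \<le> 5"
  proof -
    have "degree p \<le> (\<Sum>b\<in>W-{i}. degree [:- \<alpha> b, 1:])" unfolding p_def using degree_prod_sum_le[of "W-{i}" "\<lambda>b. [:- \<alpha> b, 1:]"] fW by (simp add: o_def)
    also have "\<dots> = card (W-{i})" by simp
    also have "\<dots> = card W - 1" using iW by (simp add: card_Diff_singleton)
    also have "\<dots> \<le> 5" using w unfolding W_def by linarith
    finally show ?thesis .
  qed
  have polyeq: "poly p x = (\<Sum>a<6. coeff p a * x^a)" for x
  proof -
    have "poly p x = (\<Sum>a\<le>degree p. coeff p a * x^a)" by (rule poly_altdef)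
    also have "\<dots> = (\<Sum>a<6. coeff p a * x^a)"
      apply (rule sum.mono_neutral_left) using deg by (auto simp: coeff_eq_0)
    finally show ?thesis .
  qed
  have "(\<Sum>b<n. u b * c b * poly p (\<alpha> b)) = (\<Sum>b<n. (\<Sum>a<6. coeff p a * (u b * \<alpha> b ^ a * c b)))"
    by (simp add: polyeq sum_distrib_left mult_ac)
  also have "\<dots> = (\<Sum>a<6. coeff p a * (\<Sum>b<n. u b * \<alpha> b ^ a * c b))"
    by (subst sum.swap) (simp add: sum_distrib_left)
  also have "\<dots> = 0" using ker by simp
  finally have s0: "(\<Sum>b<n. u b * c b * poly p (\<alpha> b)) = 0" .
  have rest: "(\<Sum>b\<in>{..<n}-{i}. u b * c b * poly p (\<alpha> b)) = 0"
  proof (rule sum.neutral, intro ballI)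
    fix b assume b: "b \<in> {..<n}-{i}"
    show "u b * c b * poly p (\<alpha> b) = 0"
    proof (cases "b \<in> W")
      case True
      have "poly p (\<alpha> b) = (\<Prod>b'\<in>W-{i}. \<alpha> b - \<alpha> b')" unfolding p_def by (simp add: poly_prod)
      also have "\<dots> = 0" using True b fW by (auto simp: prod_zero_iff)
      finally show ?thesis by simp
    next
      case False thus ?thesis using b W_def by auto
    qed
  qed
  have "(\<Sum>b<n. u b * c b * poly p (\<alpha> b)) = u i * c i * poly p (\<alpha> i) + (\<Sum>b\<in>{..<n}-{i}. u b * c b * poly p (\<alpha> b))"
    using i by (simp add: sum.remove)
  with s0 rest have z: "u i * c i * poly p (\<alpha> i) = 0" by simp
  have "poly p (\<alpha> i) = (\<Prod>b'\<in>W-{i}. \<alpha> i - \<alpha> b')" unfolding p_def by (simp add: poly_prod)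
  also have "\<dots> \<noteq> 0"
  proof -
    have "\<alpha> i - \<alpha> b' \<noteq> 0" if "b' \<in> W-{i}" for b'
      using that i inj W_def by (auto simp: inj_on_def)
    thus ?thesis using fW by (simp add: prod_zero_iff)
  qed
  finally show False using z u i ne by simp
qed

lemma choose3: "real (m choose 3) * 6 = real m * (real m - 1) * (real m - 2)"
proof (cases "m \<ge> 3")
  case True
  then obtain k where k: "m = Suc (Suc (Suc k))" by (metis add.commute add_Suc_right le_add_diff_inverse numeral_3_eq_3 plus_nat.add_0)
  have a: "fact 3 * fact (m - 3) * (m choose 3) = (fact m :: nat)" using True by (rule binomial_fact_lemma)
  have b: "m - 3 = k" using k by simp
  have c: "(fact 3 :: nat) = 6" by (simp add: numeral_3_eq_3)
  have d: "(fact m :: nat) = ((Suc (Suc (Suc k))) * (Suc (Suc k) * Suc k)) * fact k" using k by (simp only: fact_Suc of_nat_id mult.assoc)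
  have "(6 * (m choose 3)) * fact k = ((Suc (Suc (Suc k))) * (Suc (Suc k) * Suc k)) * fact k"
    using a b c d by (metis mult.assoc mult.commute)
  hence h: "6 * (m choose 3) = (Suc (Suc (Suc k))) * (Suc (Suc k) * Suc k)" by (metis fact_nonzero mult_right_cancel)
  have "real (6 * (m choose 3)) = real ((Suc (Suc (Suc k))) * (Suc (Suc k) * Suc k))" using h by (rule arg_cong)
  hence "6 * real (m choose 3) = (real k + 3) * ((real k + 2) * (real k + 1))" by (simp add: algebra_simps)
  moreover have "real m = real k + 3" using k by simp
  ultimately show ?thesis by (simp add: algebra_simps)
next
  case False
  hence "m = 0 \<or> m = 1 \<or> m = 2" by auto
  thus ?thesis by auto
qed

lemma fin_alg:
  fixes Q C3 C4 :: real
  assumes "Q > 0"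
  shows "C4 * (C3 * Q) = (C3 * 6) / (6 * Q ^ 3) * Q ^ 4 * C4"
proof -
  have q4: "Q ^ 4 = Q ^ 3 * Q" by (simp add: power_Suc2[symmetric])
  have "Q ^ 3 \<noteq> 0" using assms by simp
  then have "(C3 * 6) / (6 * Q ^ 3) * (Q ^ 3 * Q) = C3 * Q" by (simp add: field_simps)
  thus ?thesis unfolding q4 by (simp add: mult.commute)
qed

theorem mainTheorem12:
  fixes \<alpha> u :: "nat \<Rightarrow> 'a::{finite,field}" and n :: nat
  assumes "7 \<le> n" and "n \<le> CARD('a)"
    and "inj_on \<alpha> {..<n}"
    and "\<forall>i<n. u i \<noteq> 0"
  shows "real (card {e \<in> vecs n. hweight n e = 4 \<and>
            (\<exists>e' \<in> vecs n. hweight n e' \<le> 3 \<and> syndrome n u \<alpha> e' = syndrome n u \<alpha> e)})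
         \<le> (real n - 4) * (real n - 5) * (real n - 6) / (6 * (real CARD('a) - 1) ^ 3)
            * (real CARD('a) - 1) ^ 4 * real (n choose 4)"
proof -
  define q where "q = CARD('a)"
  define supp :: "(nat \<Rightarrow> 'a) \<Rightarrow> nat set" where "supp e = {i\<in>{..<n}. e i \<noteq> 0}" for e
  have fsupp: "finite (supp e)" for e by (simp add: supp_def)
  have hw: "hweight n e = card (supp e)" for e by (simp add: hweight_def supp_def)
  define A where "A = {e \<in> vecs n. hweight n e = 4 \<and>
            (\<exists>e' \<in> vecs n. hweight n e' \<le> 3 \<and> syndrome n u \<alpha> e' = syndrome n u \<alpha> e)}"
  have lin: "syndrome n u \<alpha> (\<lambda>i. e i - e' i) = (\<lambda>a. syndrome n u \<alpha> e a - syndrome n u \<alpha> e' a)" for e e'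
    by (rule ext) (simp add: syndrome_def sum_subtractf algebra_simps)
  have vdiff: "e \<in> vecs n \<Longrightarrow> e' \<in> vecs n \<Longrightarrow> (\<lambda>i. e i - e' i) \<in> vecs n" for e e' :: "nat \<Rightarrow> 'a"
    by (simp add: vecs_def)
  have kz: "c i = 0" if "c \<in> vecs n" "syndrome n u \<alpha> c = (\<lambda>_. 0)" "card (supp c) \<le> 6" for c i
  proof (rule L1[OF assms(3) assms(4) that(1)])
    show "\<forall>a<6. (\<Sum>b<n. u b * \<alpha> b ^ a * c b) = 0"
    proof (intro allI impI)
      fix a :: nat assume "a < 6"
      have "syndrome n u \<alpha> c a = 0" using that(2) by simp
      thus "(\<Sum>b<n. u b * \<alpha> b ^ a * c b) = 0" using \<open>a < 6\<close> by (simp add: syndrome_def Hmat_def)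
    qed
    show "card {i \<in> {..<n}. c i \<noteq> 0} \<le> 6" using that(3) by (simp add: supp_def)
  qed
  define E where "E e = (SOME e'. e' \<in> vecs n \<and> hweight n e' \<le> 3 \<and> syndrome n u \<alpha> e' = syndrome n u \<alpha> e)" for e
  define D where "D e = (\<lambda>i. e i - E e i)" for e
  have P1: "E e \<in> vecs n \<and> hweight n (E e) \<le> 3 \<and> syndrome n u \<alpha> (E e) = syndrome n u \<alpha> e" if "e \<in> A" for e
  proof -
    have "\<exists>e'. e' \<in> vecs n \<and> hweight n e' \<le> 3 \<and> syndrome n u \<alpha> e' = syndrome n u \<alpha> e"
      using that unfolding A_def by blast
    thus ?thesis unfolding E_def by (rule someI_ex)
  qed
  have P2: "D e \<in> vecs n \<and> syndrome n u \<alpha> (D e) = (\<lambda>_. 0)" if "e \<in> A" for e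
    using P1[OF that] that unfolding D_def A_def by (auto simp: lin vdiff)
  have P3: "supp (D e) = supp e \<union> supp (E e) \<and> supp e \<inter> supp (E e) = {} \<and> card (supp (E e)) = 3
     \<and> card (supp e) = 4 \<and> card (supp (D e)) = 7" if "e \<in> A" for e
  proof -
    have e4: "card (supp e) = 4" using that hw unfolding A_def by auto
    have E3: "card (supp (E e)) \<le> 3" using P1[OF that] hw by auto
    have sub: "supp (D e) \<subseteq> supp e \<union> supp (E e)" by (auto simp: supp_def D_def)
    have "e \<noteq> E e" using e4 E3 by auto
    then obtain i where i: "e i \<noteq> E e i" by auto
    have ge: "card (supp (D e)) \<ge> 7"
    proof (rule ccontr)
      assume "\<not> 7 \<le> card (supp (D e))"
      hence "D e i = 0" using kz P2[OF that] by auto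
      thus False using i by (simp add: D_def)
    qed
    have le: "card (supp e \<union> supp (E e)) \<le> 7" using card_Un_le[of "supp e" "supp (E e)"] e4 E3 by simp
    have cm: "card (supp (D e)) \<le> card (supp e \<union> supp (E e))" by (rule card_mono) (simp_all add: fsupp sub)
    have c7: "card (supp (D e)) = 7" using cm ge le by linarith
    have ceq: "card (supp (D e)) = card (supp e \<union> supp (E e))" using cm ge le by linarith
    have eq: "supp (D e) = supp e \<union> supp (E e)"
      by (rule card_subset_eq[OF _ sub ceq]) (simp add: fsupp)
    have cu: "card (supp e \<union> supp (E e)) = 7" using eq c7 by simp
    have "card (supp e) + card (supp (E e)) = card (supp e \<union> supp (E e)) + card (supp e \<inter> supp (E e))"
      using card_Un_Int fsupp by blast
    hence "card (supp e \<inter> supp (E e)) = 0" and E3': "card (supp (E e)) = 3" using cu e4 E3 by auto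
    hence "supp e \<inter> supp (E e) = {}" using fsupp by auto
    thus ?thesis using eq E3' e4 c7 by simp
  qed
  define f where "f e = (supp e, supp (E e), D e (Min (supp e \<union> supp (E e))))" for e
  define B where "B = (SIGMA S:{S. S \<subseteq> {..<n} \<and> card S = 4}. SIGMA T:{T. T \<subseteq> {..<n} - S \<and> card T = 3}. (UNIV - {0::'a}))"
  have fB: "f ` A \<subseteq> B"
  proof
    fix x assume "x \<in> f ` A"
    then obtain e where e: "e \<in> A" and x: "x = f e" by auto
    note p = P3[OF e]
    let ?W = "supp e \<union> supp (E e)"
    have "?W \<noteq> {}" using p by (metis card.empty zero_neq_numeral)
    hence "Min ?W \<in> ?W" by (intro Min_in) (simp_all add: fsupp)
    hence "Min ?W \<in> supp (D e)" using p by simp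
    hence "D e (Min ?W) \<noteq> 0" by (simp add: supp_def)
    moreover have "supp e \<subseteq> {..<n}" "supp (E e) \<subseteq> {..<n} - supp e" using p by (auto simp: supp_def)
    ultimately show "x \<in> B" using x p unfolding B_def f_def by auto
  qed
  have inj: "inj_on f A"
  proof (rule inj_onI)
    fix e1 e2 assume e1: "e1 \<in> A" and e2: "e2 \<in> A" and feq: "f e1 = f e2"
    note p1 = P3[OF e1] and p2 = P3[OF e2]
    have s: "supp e1 = supp e2" and t: "supp (E e1) = supp (E e2)" using feq by (auto simp: f_def)
    define W where "W = supp e1 \<union> supp (E e1)"
    define m where "m = Min W"
    have W2: "W = supp e2 \<union> supp (E e2)" using s t W_def by simp
    have dm: "D e1 m = D e2 m" using feq by (simp add: f_def m_def W_def s t)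
    have mW: "m \<in> W" using p1 fsupp unfolding m_def W_def by (metis Min_in card.empty finite_UnI zero_neq_numeral)
    define c where "c = (\<lambda>i. D e1 i - D e2 i)"
    have cv: "c \<in> vecs n" using P2[OF e1] P2[OF e2] vdiff c_def by simp
    have cs: "syndrome n u \<alpha> c = (\<lambda>_. 0)" using P2[OF e1] P2[OF e2] unfolding c_def by (simp add: lin)
    have "supp c \<subseteq> W - {m}"
    proof
      fix i assume "i \<in> supp c"
      hence i: "i < n" "D e1 i \<noteq> D e2 i" by (auto simp: supp_def c_def)
      hence "D e1 i \<noteq> 0 \<or> D e2 i \<noteq> 0" by auto
      hence "i \<in> supp (D e1) \<or> i \<in> supp (D e2)" using i by (auto simp: supp_def)
      hence "i \<in> W" using p1 p2 W2 W_def by auto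
      thus "i \<in> W - {m}" using i dm by auto
    qed
    moreover have "card W = 7" using p1 W_def by metis
    moreover have "card (W - {m}) = 6" using mW calculation(2) fsupp W_def by (simp add: card_Diff_singleton)
    ultimately have "card (supp c) \<le> 6" using card_mono[of "W - {m}" "supp c"] fsupp W_def by simp
    hence c0: "c i = 0" for i using kz cv cs by blast
    hence dd: "D e1 i = D e2 i" for i using c_def by (metis eq_iff_diff_eq_0)
    show "e1 = e2"
    proof
      fix i
      show "e1 i = e2 i"
      proof (cases "i < n")
        case False
        thus ?thesis using e1 e2 by (simp add: A_def vecs_def)
      next
        case True
        show ?thesis
        proof (cases "i \<in> supp e1")
          case True
          hence "i \<notin> supp (E e1)" "i \<notin> supp (E e2)" using p1 p2 s by auto
          hence "E e1 i = 0" "E e2 i = 0" using \<open>i < n\<close> by (auto simp: supp_def)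
          thus ?thesis using dd[of i] by (simp add: D_def)
        next
          case False
          hence "i \<notin> supp e2" using s by simp
          thus ?thesis using False \<open>i < n\<close> by (simp add: supp_def)
        qed
      qed
    qed
  qed
  have fin: "finite B" unfolding B_def by (rule finite_SigmaI; auto intro: finite_SigmaI)
  have cA: "card A \<le> card B" using card_inj_on_le[OF inj fB fin] .
  have cB: "card B = (n choose 4) * (((n - 4) choose 3) * (q - 1))"
  proof -
    have inner: "card (SIGMA T:{T. T \<subseteq> {..<n} - S \<and> card T = 3}. (UNIV - {0::'a})) = ((n - 4) choose 3) * (q - 1)"
      if "S \<subseteq> {..<n}" "card S = 4" for S
    proof -
      have "card (SIGMA T:{T. T \<subseteq> {..<n} - S \<and> card T = 3}. (UNIV - {0::'a}))
          = card {T. T \<subseteq> {..<n} - S \<and> card T = 3} * card (UNIV - {0::'a})"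
        by (simp add: card_SigmaI)
      also have "card {T. T \<subseteq> {..<n} - S \<and> card T = 3} = card ({..<n} - S) choose 3"
        by (simp add: n_subsets)
      also have "card ({..<n} - S) = n - 4" using that by (simp add: card_Diff_subset finite_subset)
      also have "card (UNIV - {0::'a}) = q - 1" by (simp add: q_def card_Diff_singleton)
      finally show ?thesis .
    qed
    have "card B = (\<Sum>S\<in>{S. S \<subseteq> {..<n} \<and> card S = 4}. card (SIGMA T:{T. T \<subseteq> {..<n} - S \<and> card T = 3}. (UNIV - {0::'a})))"
      unfolding B_def by (rule card_SigmaI) (auto intro: finite_SigmaI)
    also have "\<dots> = (\<Sum>S\<in>{S. S \<subseteq> {..<n} \<and> card S = 4}. ((n - 4) choose 3) * (q - 1))"
      by (rule sum.cong[OF refl], rule inner) auto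
    also have "\<dots> = (n choose 4) * (((n - 4) choose 3) * (q - 1))" by (simp add: n_subsets)
    finally show ?thesis .
  qed
  have q1: "real q - 1 > 0" using assms(1,2) q_def by simp
  have rq: "real (q - 1) = real q - 1" using q1 by (simp add: of_nat_diff)
  have c3: "real ((n - 4) choose 3) * 6 = (real n - 4) * (real n - 5) * (real n - 6)"
    using choose3[of "n-4"] assms(1) by (simp add: of_nat_diff algebra_simps)
  have "real (card A) \<le> real ((n choose 4) * (((n - 4) choose 3) * (q - 1)))"
    using cA unfolding cB of_nat_le_iff .
  also have "\<dots> = real (n choose 4) * (real ((n - 4) choose 3) * (real q - 1))"
    by (simp only: of_nat_mult rq)
  also have "\<dots> = (real n - 4) * (real n - 5) * (real n - 6) / (6 * (real q - 1) ^ 3)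
            * (real q - 1) ^ 4 * real (n choose 4)"
    unfolding c3[symmetric] using fin_alg[OF q1] by simp
  finally show ?thesis unfolding A_def q_def .
qed

end
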